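(* Let $f$, $g$, $\xi$, $F$ satisfy the standing assumptions below, and let $x$ be the unique continuous solution of $x'(t)=-f(x(t))+g(t)$, $t>0$, $x(0)=\xi$. Suppose there exist $\delta>0$ and a function $\phi$ increasing on $(0,\delta)$ with $\lim_{x\to0^+}f(x)/\phi(x)=1$, that \[ \lim_{t\to\infty}\frac{g(t)}{f(F^{-1}(t))}=+\infty, \] and that $x(t)\to0$ as $t\to\infty$. If either $f\in\mathrm{RV}_0(\beta)$ for some $\beta>1$, or $f\circ F^{-1}\in\mathrm{RV}_\infty(-1)$, then \[ \lim_{t\to\infty}\frac{F(x(t))}{t}=0. \]
   Context: Standing assumptions: $f\in C(\mathbb{R};\mathbb{R})$ is locally Lipschitz continuous on $\mathbb{R}$, $f(0)=0$ and $xf(x)>0$ for $x\neq0$; $g\in C([0,\infty);\mathbb{R})$ with $g(t)>0$ for $t>0$; $\xi>0$. $F(x)=\int_x^1 \frac{du}{f(u)}$ for $x>0$, with $\lim_{x\to0^+}F(x)=+\infty$; $F^{-1}$ is the inverse of the strictly decreasing function $F$. $\mathrm{RV}_0(\beta)$: measurable positive $\varphi$ on $(0,\infty)$ with $\varphi(\lambda x)/\varphi(x)\to\lambda^\beta$ as $x\to0^+$ for every $\lambda>0$. $\mathrm{RV}_\infty(\alpha)$: measurable positive $h$ with $h(\lambda t)/h(t)\to\lambda^\alpha$ as $t\to\infty$ for every $\lambda>0$. *)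

theory Defs
  imports "HOL-Analysis.Analysis"
begin

definition Fint :: "(real \<Rightarrow> real) \<Rightarrow> real \<Rightarrow> real" where
  "Fint f x = (if x \<le> 1 then integral {x..1} (\<lambda>u. 1 / f u)
               else - integral {1..x} (\<lambda>u. 1 / f u))"

definition Finv :: "(real \<Rightarrow> real) \<Rightarrow> real \<Rightarrow> real" where
  "Finv f t = inv_into {0<..} (Fint f) t"

definition RV0 :: "real \<Rightarrow> (real \<Rightarrow> real) \<Rightarrow> bool" where
  "RV0 \<beta> \<phi> \<longleftrightarrow> (\<forall>x>0. \<phi> x > 0) \<and> \<phi> \<in> borel_measurable (restrict_space borel {0<..}) \<and>
     (\<forall>c>0. ((\<lambda>x. \<phi> (c * x) / \<phi> x) \<longlongrightarrow> c powr \<beta>) (at_right 0))"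

definition RVinf :: "real \<Rightarrow> (real \<Rightarrow> real) \<Rightarrow> bool" where
  "RVinf \<alpha> h \<longleftrightarrow> (\<exists>T. (\<forall>t\<ge>T. h t > 0) \<and> h \<in> borel_measurable (restrict_space borel {T..})) \<and>
     (\<forall>c>0. ((\<lambda>t. h (c * t) / h t) \<longlongrightarrow> c powr \<alpha>) at_top)"

end

theory Submission
  imports Defs
begin


lemma F_int:
  fixes f :: "real \<Rightarrow> real"
  assumes fc: "continuous_on UNIV f" and fp: "\<forall>u>0. f u > (0::real)" and a: "0 < a"
  shows "(\<lambda>u. 1 / f u) integrable_on {a..b}"
proof -
  have nz: "f u \<noteq> 0" if "u \<in> {a..b}" for u
  proof -
    have "0 < u" using that a by auto
    thus ?thesis using fp by force
  qed
  have "continuous_on {a..b} (\<lambda>u. 1 / f u)"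
    by (intro continuous_on_divide continuous_on_const continuous_on_subset[OF fc])
       (use nz in auto)
  thus ?thesis by (rule integrable_continuous_interval)
qed

lemma I_nonneg:
  fixes f :: "real \<Rightarrow> real"
  assumes fc: "continuous_on UNIV f" and fp: "\<forall>u>0. f u > (0::real)" and a: "0 < a"
  shows "0 \<le> integral {a..b} (\<lambda>u. 1 / f u)"
proof (rule integral_nonneg[OF F_int[OF fc fp a]])
  fix u assume "u \<in> {a..b}"
  hence "f u > 0" using fp a by auto
  thus "0 \<le> 1 / f u" by simp
qed

lemma F_split:
  fixes f :: "real \<Rightarrow> real"
  assumes fc: "continuous_on UNIV f" and fp: "\<forall>u>0. f u > (0::real)" and a: "0 < a"
    and ab: "a \<le> b" and b1: "b \<le> 1"
  shows "Fint f a = integral {a..b} (\<lambda>u. 1 / f u) + Fint f b"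
  using Henstock_Kurzweil_Integration.integral_combine[OF ab b1 F_int[OF fc fp a]] ab b1
  by (simp add: Fint_def)

lemma F_anti:
  fixes f :: "real \<Rightarrow> real"
  assumes fc: "continuous_on UNIV f" and fp: "\<forall>u>0. f u > (0::real)" and a: "0 < a"
    and ab: "a \<le> b" and b1: "b \<le> 1"
  shows "Fint f b \<le> Fint f a"
  using F_split[OF fc fp a ab b1] I_nonneg[OF fc fp a, of b] by simp

lemma F_gt1:
  fixes f :: "real \<Rightarrow> real"
  assumes fc: "continuous_on UNIV f" and fp: "\<forall>u>0. f u > (0::real)" and u: "1 < u"
  shows "Fint f u \<le> 0"
  using I_nonneg[OF fc fp, of 1 u] u by (simp add: Fint_def)

lemma F_one: "Fint f 1 = 0"
  by (simp add: Fint_def)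

lemma F_cont:
  fixes f :: "real \<Rightarrow> real"
  assumes fc: "continuous_on UNIV f" and fp: "\<forall>u>0. f u > (0::real)" and c: "0 < c"
  shows "continuous_on {c..1} (Fint f)"
proof -
  have A: "continuous_on {c..1} (\<lambda>u. integral {c..1} (\<lambda>u. 1 / f u) - integral {c..u} (\<lambda>u. 1 / f u))"
    by (intro continuous_intros indefinite_integral_continuous_1 F_int[OF fc fp c])
  have B: "integral {c..1} (\<lambda>u. 1 / f u) - integral {c..u} (\<lambda>u. 1 / f u) = Fint f u"
    if "u \<in> {c..1}" for u
    using F_split[OF fc fp c, of u] that by (simp add: Fint_def)
  show ?thesis by (rule continuous_on_eq[OF A B])
qed

lemma F_isCont:
  fixes f :: "real \<Rightarrow> real"
  assumes fc: "continuous_on UNIV f" and fp: "\<forall>u>0. f u > (0::real)" and u: "0 < u" "u < 1"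
  shows "isCont (Fint f) u"
  by (rule continuous_on_interior[OF F_cont[OF fc fp, of "u/2"]]) (use u in auto)

lemma F_surj:
  fixes f :: "real \<Rightarrow> real"
  assumes fc: "continuous_on UNIV f" and fp: "\<forall>u>0. f u > (0::real)"
    and F_lim: "filterlim (Fint f) at_top (at_right 0)" and s: "0 \<le> s"
  shows "\<exists>u. 0 < u \<and> u \<le> 1 \<and> Fint f u = s"
proof -
  have "eventually (\<lambda>y. Fint f y > s) (at_right 0)"
    using F_lim filterlim_at_top_dense by blast
  then obtain b where b: "b > 0" "\<And>y. 0 < y \<Longrightarrow> y < b \<Longrightarrow> Fint f y > s"
    unfolding eventually_at_right_field by auto
  define u0 where "u0 = min (b/2) (1/2)"
  have u0: "0 < u0" "u0 < b" "u0 \<le> 1" using b unfolding u0_def by auto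
  have "\<exists>x. u0 \<le> x \<and> x \<le> 1 \<and> Fint f x = s"
    by (rule IVT2') (use F_cont[OF fc fp u0(1)] b(2)[OF u0(1,2)] s u0 in \<open>auto simp: F_one\<close>)
  then obtain x where "u0 \<le> x" "x \<le> 1" "Fint f x = s" by blast
  thus ?thesis using u0 by (intro exI[of _ x]) auto
qed

lemma Finv_props:
  fixes f :: "real \<Rightarrow> real"
  assumes fc: "continuous_on UNIV f" and fp: "\<forall>u>0. f u > (0::real)"
    and F_lim: "filterlim (Fint f) at_top (at_right 0)" and s: "0 \<le> s"
  shows "Finv f s > 0" "Fint f (Finv f s) = s"
proof -
  obtain u where u: "0 < u" "Fint f u = s" using F_surj[OF fc fp F_lim s] by auto
  hence sin: "s \<in> Fint f ` {0<..}" by (intro image_eqI[of _ _ u]) auto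
  show "Finv f s > 0"
    unfolding Finv_def using inv_into_into[OF sin] by simp
  show "Fint f (Finv f s) = s"
    unfolding Finv_def using f_inv_into_f[OF sin] .

qed

lemma Finv_lt1:
  fixes f :: "real \<Rightarrow> real"
  assumes fc: "continuous_on UNIV f" and fp: "\<forall>u>0. f u > (0::real)"
    and F_lim: "filterlim (Fint f) at_top (at_right 0)" and s: "0 < s"
  shows "Finv f s < 1"
proof (rule ccontr)
  assume "\<not> Finv f s < 1"
  hence "Finv f s = 1 \<or> Finv f s > 1" by auto
  thus False using Finv_props[OF fc fp F_lim, of s] s F_gt1[OF fc fp, of "Finv f s"]
    by (auto simp: F_one)
qed

lemma Finv_lim:
  fixes f :: "real \<Rightarrow> real"
  assumes fc: "continuous_on UNIV f" and fp: "\<forall>u>0. f u > (0::real)"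
    and F_lim: "filterlim (Fint f) at_top (at_right 0)"
  shows "filterlim (Finv f) (at_right 0) at_top"
proof (rule tendsto_imp_filterlim_at_right)
  show "eventually (\<lambda>s. Finv f s > 0) at_top"
    by (rule eventually_at_top_linorderI[of 0]) (use Finv_props(1)[OF fc fp F_lim] in auto)
  show "(Finv f \<longlongrightarrow> 0) at_top"
  proof (rule order_tendstoI)
    fix a :: real assume "a < 0"
    show "eventually (\<lambda>s. Finv f s > a) at_top"
      by (rule eventually_at_top_linorderI[of 0]) (use Finv_props(1)[OF fc fp F_lim] \<open>a<0\<close> in \<open>force\<close>)
  next
    fix a :: real assume a: "0 < a"
    define e where "e = min a (1/2)"
    have e: "0 < e" "e \<le> a" "e \<le> 1" using a by (auto simp: e_def)
    have "Finv f s < a" if s: "s > max 0 (Fint f e)" for s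
    proof (rule ccontr)
      assume "\<not> Finv f s < a"
      hence "e \<le> Finv f s" using e by auto
      moreover have "Finv f s < 1" using Finv_lt1[OF fc fp F_lim, of s] s by auto
      ultimately have "Fint f (Finv f s) \<le> Fint f e" using F_anti[OF fc fp e(1)] by auto
      thus False using Finv_props(2)[OF fc fp F_lim, of s] s by auto
    qed
    thus "eventually (\<lambda>s. Finv f s < a) at_top"
      by (rule eventually_at_top_linorderI[of "max 0 (Fint f e) + 1"]) auto
  qed
qed



lemma f_le:
  fixes f \<phi> :: "real \<Rightarrow> real"
  assumes fp: "\<forall>u>0. f u > 0" and delta_pos: "\<delta> > 0"
    and phi_mono: "mono_on {0<..<\<delta>} \<phi>"
    and f_phi: "((\<lambda>y. f y / \<phi> y) \<longlongrightarrow> 1) (at_right 0)"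
  shows "\<exists>d>0. \<forall>u v. 0 < u \<longrightarrow> u \<le> v \<longrightarrow> v < d \<longrightarrow> f u \<le> 3 * f v"
proof -
  have "eventually (\<lambda>y. dist (f y / \<phi> y) 1 < 1/2) (at_right 0)"
    using f_phi[unfolded tendsto_iff, rule_format, of "1/2"] by simp
  then obtain b where b: "b > 0" "\<And>y. 0 < y \<Longrightarrow> y < b \<Longrightarrow> dist (f y / \<phi> y) 1 < 1/2"
    unfolding eventually_at_right_field by blast
  have r: "\<phi> y > 0 \<and> f y < 3/2 * \<phi> y \<and> \<phi> y < 2 * f y" if "0 < y" "y < b" for y
  proof -
    have "\<bar>f y / \<phi> y - 1\<bar> < 1/2" using b(2)[OF that] by (simp only: dist_real_def)
    hence d: "1/2 < f y / \<phi> y" "f y / \<phi> y < 3/2" by linarith+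
    have fy: "f y > 0" using fp that by auto
    have ph: "\<phi> y > 0"
    proof (rule ccontr)
      assume "\<not> \<phi> y > 0"
      hence "f y / \<phi> y \<le> 0" using fy by (simp add: divide_nonneg_nonpos)
      thus False using d by linarith
    qed
    have "1/2 * \<phi> y < f y" using d(1) ph by (simp add: pos_less_divide_eq)
    moreover have "f y < 3/2 * \<phi> y" using d(2) ph by (simp add: pos_divide_less_eq)
    ultimately show ?thesis using ph by linarith
  qed
  define d where "d = min b \<delta>"
  have "f u \<le> 3 * f v" if "0 < u" "u \<le> v" "v < d" for u v
  proof -
    have "\<phi> u \<le> \<phi> v"
      by (rule mono_onD[OF phi_mono]) (use that in \<open>auto simp: d_def\<close>)
    moreover have "u < b" "v < b" using that by (auto simp: d_def)
    ultimately show ?thesis using r[of u] r[of v] that by linarith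
  qed
  moreover have "d > 0" using b delta_pos by (auto simp: d_def)
  ultimately show ?thesis by blast
qed

lemma key_RVinf:
  fixes h :: "real \<Rightarrow> real"
  assumes h: "RVinf (-1) h" and e: "0 < e"
  shows "\<exists>C>0. eventually (\<lambda>t. h (e * t) \<le> C * h t) at_top"
proof -
  obtain T where T: "\<forall>t\<ge>T. h t > 0"
    using h unfolding RVinf_def by blast
  have lim: "((\<lambda>t. h (e * t) / h t) \<longlongrightarrow> e powr (-1)) at_top"
    using conjunct2[OF h[unfolded RVinf_def]] e by blast
  define C where "C = e powr (-1) + 1"
  have C: "C > 0" using e by (simp add: C_def add_pos_pos)
  have "eventually (\<lambda>t. h (e * t) / h t < C) at_top"
    using order_tendstoD(2)[OF lim, of C] by (simp add: C_def)
  moreover have "eventually (\<lambda>t. h t > 0) at_top"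
    by (rule eventually_at_top_linorderI[of T]) (use T in blast)
  ultimately have "eventually (\<lambda>t. h (e * t) \<le> C * h t) at_top"
  proof eventually_elim
    case (elim t)
    hence "h (e * t) < C * h t" by (simp add: pos_divide_less_eq)
    thus ?case by simp
  qed
  thus ?thesis using C by blast
qed



lemma key_RV0:
  fixes f :: "real \<Rightarrow> real"
  assumes fc: "continuous_on UNIV f" and fp: "\<forall>u>0. f u > (0::real)"
    and F_lim: "filterlim (Fint f) at_top (at_right 0)"
    and b1: "\<beta> > 1" and rv: "RV0 \<beta> f" and e: "0 < e" "e < 1" and dpos: "d > 0"
    and fle: "\<forall>u v. 0 < u \<longrightarrow> u \<le> v \<longrightarrow> v < d \<longrightarrow> f u \<le> 3 * f v"
  shows "\<exists>C>0. eventually (\<lambda>t. f (Finv f (e * t)) \<le> C * f (Finv f t)) at_top"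
proof -
  define K0 where "K0 = (e/4) powr (1/(1-\<beta>))"
  define K where "K = max 1 K0"
  have K0pos: "K0 > 0" using e by (simp add: K0_def)
  have K1a: "K \<ge> 1" by (simp add: K_def)
  hence K1: "K \<ge> 1" "K > 0" by simp_all
  have "K0 \<le> K" by (simp add: K_def)
  have "K powr (1-\<beta>) \<le> K0 powr (1-\<beta>)"
    by (rule powr_mono2') (use b1 K0pos \<open>K0 \<le> K\<close> in simp_all)
  also have "K0 powr (1-\<beta>) = (e/4) powr (1/(1-\<beta>) * (1-\<beta>))"
    unfolding K0_def by (rule powr_powr)
  also have "1/(1-\<beta>) * (1-\<beta>) = 1" using b1 by simp
  also have "(e/4) powr 1 = e/4" using e by simp
  finally have Kp: "K powr (1-\<beta>) \<le> e/4" .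
  have lim: "((\<lambda>v. f (K * v) / f v) \<longlongrightarrow> K powr \<beta>) (at_right 0)"
    using conjunct2[OF conjunct2[OF rv[unfolded RV0_def]]] K1(2) by blast
  have Kb: "K powr \<beta> > 0" using K1 by simp
  have "eventually (\<lambda>v. f (K * v)/f v > K powr \<beta> / 2) (at_right 0)"
  proof -
    have "K powr \<beta> / 2 < K powr \<beta>" using Kb by linarith
    from order_tendstoD(1)[OF lim this] show ?thesis .
  qed
  then obtain b where b: "b > 0" "\<And>v. 0<v \<Longrightarrow> v<b \<Longrightarrow> f (K * v)/f v > K powr \<beta>/2"
    unfolding eventually_at_right_field by blast
  define v0 where "v0 = min (b/2) (1/K)"
  have v0: "0 < v0" "v0 < b" "v0 \<le> 1/K"
    using b K1 by (auto simp: v0_def)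
  have Kv0: "K * v0 \<le> 1" using v0(3) K1 by (simp add: field_simps)
  have "1/K \<le> 1" using K1 by simp
  hence v01: "v0 \<le> 1" using v0(3) by linarith
  have A: "integral {K * a..K * v0} (\<lambda>u. 1/f u) \<le> (e/2) * integral {a..v0} (\<lambda>u. 1/f u)"
    if a: "0<a" "a \<le> v0" for a
  proof -
    have st: "integral {a..v0} (\<lambda>x. 1 / f (K * x)) = (1/K) * integral {K * a..K * v0} (\<lambda>u. 1/f u)"
      using integral_stretch_real[where m=K and f="\<lambda>u. 1/f u" and a="K * a" and b="K * v0"] K1 by simp
    have Ka: "0 < K * a" using a K1 by simp
    have intg: "(\<lambda>x. 1 / f (K * x)) integrable_on {a..v0}"
      using integrable_stretch_real[OF F_int[OF fc fp Ka, of "K * v0"], of K] K1 by simp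
    have pw: "1 / f (K * x) \<le> (2 / K powr \<beta>) * (1 / f x)" if "x \<in> {a..v0}" for x
    proof -
      have x: "0 < x" "x < b" using that a v0 by auto
      have fx: "f x > 0" using fp x by auto
      have fKx: "f (K * x) > 0" using fp x K1 by auto
      have "f (K * x) > K powr \<beta> / 2 * f x" using b(2)[OF x] fx by (simp add: field_simps)
      thus ?thesis using fx fKx Kb by (simp add: field_simps)
    qed
    have "integral {a..v0} (\<lambda>x. 1 / f (K * x)) \<le> integral {a..v0} (\<lambda>x. (2 / K powr \<beta>) * (1 / f x))"
      by (rule integral_le[OF intg integrable_on_mult_right[OF F_int[OF fc fp a(1)]]]) (use pw in auto)
    also have "\<dots> = (2 / K powr \<beta>) * integral {a..v0} (\<lambda>u. 1/f u)"
      by (rule integral_mult_right)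
    finally have J: "integral {a..v0} (\<lambda>x. 1 / f (K * x)) \<le> (2 / K powr \<beta>) * integral {a..v0} (\<lambda>u. 1/f u)" .
    define JJ where "JJ = integral {a..v0} (\<lambda>x. 1 / f (K * x))"
    define II where "II = integral {K * a..K * v0} (\<lambda>u. 1/f u)"
    define IA where "IA = integral {a..v0} (\<lambda>u. 1/f u)"
    have st': "JJ = (1/K) * II" using st unfolding JJ_def II_def .
    have "II = K * JJ" using st' K1 by simp
    also have "\<dots> \<le> K * ((2 / K powr \<beta>) * IA)"
      by (rule mult_left_mono[OF J[folded JJ_def IA_def]]) (use K1 in simp)
    also have "\<dots> = K * (2 / K powr \<beta>) * IA" by (simp only: mult.assoc)
    finally have "integral {K * a..K * v0} (\<lambda>u. 1/f u) \<le> K * (2 / K powr \<beta>) * integral {a..v0} (\<lambda>u. 1/f u)"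
      unfolding II_def IA_def .
    also have "K * (2 / K powr \<beta>) = 2 * K powr (1-\<beta>)" using K1 by (simp add: powr_diff)
    also have "2 * K powr (1-\<beta>) * integral {a..v0} (\<lambda>u. 1/f u) \<le> (e/2) * integral {a..v0} (\<lambda>u. 1/f u)"
      by (rule mult_right_mono) (use Kp I_nonneg[OF fc fp a(1)] in auto)
    finally show ?thesis .
  qed
  define C0 where "C0 = Fint f (K * v0)"
  have C0: "C0 \<ge> 0" using F_anti[OF fc fp _ Kv0 order_refl] v0 K1 by (simp add: C0_def F_one)
  have B: "Fint f (K * a) \<le> (e/2) * Fint f a + C0" if a: "0<a" "a \<le> v0" for a
  proof -
    have Ka: "0 < K * a" "K * a \<le> K * v0" using a K1 by auto
    have s1: "Fint f (K * a) = integral {K * a..K * v0} (\<lambda>u. 1/f u) + C0"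
      using F_split[OF fc fp Ka Kv0] by (simp add: C0_def)
    have s2: "Fint f a = integral {a..v0} (\<lambda>u. 1/f u) + Fint f v0"
      using F_split[OF fc fp a v01] .
    have "Fint f v0 \<ge> 0" using F_anti[OF fc fp v0(1) v01 order_refl] by (simp add: F_one)
    hence "integral {a..v0} (\<lambda>u. 1/f u) \<le> Fint f a" using s2 by simp
    hence "(e/2) * integral {a..v0} (\<lambda>u. 1/f u) \<le> (e/2) * Fint f a" using e by simp
    thus ?thesis using s1 A[OF a] by simp
  qed
  have ev1: "eventually (\<lambda>v. v < v0 \<and> v < d/K \<and> f (K * v) / f v < K powr \<beta> + 1) (at_right 0)"
  proof -
    have "eventually (\<lambda>v. v < min v0 (d/K)) (at_right 0)"
      unfolding eventually_at_right_field using v0 dpos K1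
      by (intro exI[of _ "min v0 (d/K)"]) auto
    moreover have "eventually (\<lambda>v. f (K * v) / f v < K powr \<beta> + 1) (at_right 0)"
      using order_tendstoD(2)[OF lim, of "K powr \<beta> + 1"] by simp
    ultimately show ?thesis by eventually_elim auto
  qed
  have ev2: "eventually (\<lambda>t. Finv f t < v0 \<and> Finv f t < d/K \<and> f (K * Finv f t) / f (Finv f t) < K powr \<beta> + 1) at_top"
    using eventually_compose_filterlim[OF ev1 Finv_lim[OF fc fp F_lim]] .
  have ev3: "eventually (\<lambda>t. t > 2 * C0/e + 1) at_top" by (rule eventually_gt_at_top)
  have "eventually (\<lambda>t. f (Finv f (e * t)) \<le> (3 * (K powr \<beta> + 1)) * f (Finv f t)) at_top"
    using ev2 ev3
  proof eventually_elim
    case (elim t)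
    have "2 * C0 / e \<ge> 0" using C0 e by simp
    hence t0: "t > 0" using elim by linarith
    define a where "a = Finv f t"
    have a: "0 < a" "Fint f a = t" using Finv_props[OF fc fp F_lim, of t] t0 by (auto simp: a_def)
    have a1: "a < v0" using conjunct1[OF elim(1)] unfolding a_def .
    have a2: "a < d / K" using conjunct1[OF conjunct2[OF elim(1)]] unfolding a_def .
    have a3: "f (K * a) / f a < K powr \<beta> + 1" using conjunct2[OF conjunct2[OF elim(1)]] unfolding a_def .
    have av: "a \<le> v0" "K * a < d" using a1 a2 K1 by (simp_all add: pos_less_divide_eq mult.commute)
    have "e * t > 2 * C0" using elim(2) e by (simp add: field_simps)
    hence FKa: "Fint f (K * a) < e * t" using B[OF a(1) av(1)] a(2) by simp
    define bb where "bb = Finv f (e * t)"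
    have et: "e * t > 0" using e t0 by simp
    have bb: "0 < bb" "Fint f bb = e * t" "bb < 1"
      using Finv_props[OF fc fp F_lim, of "e * t"] Finv_lt1[OF fc fp F_lim et] et by (auto simp: bb_def)
    have bK: "bb \<le> K * a"
    proof (rule ccontr)
      assume "\<not> bb \<le> K * a"
      hence "Fint f bb \<le> Fint f (K * a)" using F_anti[OF fc fp _ _ less_imp_le[OF bb(3)], of "K * a"] a K1 by auto
      thus False using FKa bb by simp
    qed
    have "f bb \<le> 3 * f (K * a)" using fle bb(1) bK av(2) by blast
    moreover have "f (K * a) < (K powr \<beta> + 1) * f a"
    proof -
      have "f a > 0" using fp a(1) by simp
      thus ?thesis using a3 by (simp add: pos_divide_less_eq)
    qed
    ultimately have "f bb \<le> 3 * ((K powr \<beta> + 1) * f a)" by linarith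
    hence "f bb \<le> (3 * (K powr \<beta> + 1)) * f a" by (simp only: mult.assoc)
    thus ?case unfolding bb_def a_def .
  qed
  moreover have "3 * (K powr \<beta> + 1) > 0" by (rule mult_pos_pos, simp, insert Kb, linarith)
  ultimately show ?thesis by blast
qed



theorem theorem3:
  fixes f g x \<phi> :: "real \<Rightarrow> real" and \<xi> \<delta> \<beta> :: real
  assumes f_cont: "continuous_on UNIV f"
    and f_loclip: "\<forall>y. \<exists>u>0. \<exists>L. L-lipschitz_on (cball y u) f"
    and f0: "f 0 = 0"
    and f_sign: "\<forall>y. y \<noteq> 0 \<longrightarrow> y * f y > 0"
    and g_cont: "continuous_on {0..} g"
    and g_pos: "\<forall>t>0. g t > 0"
    and xi_pos: "\<xi> > 0"
    and F_lim: "filterlim (Fint f) at_top (at_right 0)"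
    and x_cont: "continuous_on {0..} x"
    and x_init: "x 0 = \<xi>"
    and x_ode: "\<forall>t>0. (x has_real_derivative (- f (x t) + g t)) (at t)"
    and delta_pos: "\<delta> > 0"
    and phi_mono: "mono_on {0<..<\<delta>} \<phi>"
    and f_phi: "((\<lambda>y. f y / \<phi> y) \<longlongrightarrow> 1) (at_right 0)"
    and g_lim: "filterlim (\<lambda>t. g t / f (Finv f t)) at_top at_top"
    and x_lim: "(x \<longlongrightarrow> 0) at_top"
    and case_RV: "(\<beta> > 1 \<and> RV0 \<beta> f) \<or> RVinf (-1) (\<lambda>t. f (Finv f t))"
  shows "((\<lambda>t. Fint f (x t) / t) \<longlongrightarrow> 0) at_top"
proof -
  have fp: "\<forall>u>0. f u > 0"
  proof (intro allI impI)
    fix u :: real assume "u > 0"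
    thus "f u > 0" using f_sign[rule_format, of u] by (simp add: zero_less_mult_iff)
  qed
  have fnp: "f u \<le> 0" if "u \<le> 0" for u
  proof (cases "u = 0")
    case True thus ?thesis using f0 by simp
  next
    case False
    hence "u < 0" using that by simp
    thus ?thesis using f_sign[rule_format, of u] False by (simp add: zero_less_mult_iff)
  qed
  have xpos: "x t > 0" if t: "t \<ge> 0" for t
  proof (rule ccontr)
    assume nt: "\<not> x t > 0"
    define S where "S = {\<tau> \<in> {0..t}. x \<tau> \<le> 0}"
    have xc0: "continuous_on {0..t} x" by (rule continuous_on_subset[OF x_cont]) auto
    have Scl: "closed S" unfolding S_def
      by (rule continuous_on_closed_Collect_le[OF xc0 continuous_on_const]) simp
    have tS: "t \<in> S" using t nt by (auto simp: S_def)
    have bdd: "bdd_below S" by (rule bdd_belowI[of _ 0]) (auto simp: S_def)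
    define t0 where "t0 = Inf S"
    have t0S: "t0 \<in> S" unfolding t0_def using closed_contains_Inf[OF _ bdd Scl] tS by auto
    have t0le: "t0 \<le> t" unfolding t0_def using cInf_lower[OF tS bdd] .
    have xt0: "x t0 \<le> 0" "t0 \<ge> 0" using t0S by (auto simp: S_def)
    have t0pos: "t0 > 0" using xt0 x_init xi_pos by (cases "t0 = 0") auto
    have below: "x \<tau> > 0" if "0 \<le> \<tau>" "\<tau> < t0" for \<tau>
    proof (rule ccontr)
      assume "\<not> x \<tau> > 0"
      hence "\<tau> \<in> S" using that t0le by (auto simp: S_def)
      hence "t0 \<le> \<tau>" unfolding t0_def using cInf_lower[OF _ bdd] by auto
      thus False using that by simp
    qed
    have der: "DERIV x t0 :> - f (x t0) + g t0" using x_ode t0pos by auto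
    have lpos: "- f (x t0) + g t0 > 0" using fnp[OF xt0(1)] g_pos t0pos by force
    obtain dd where dd: "dd > 0" "\<And>h. h > 0 \<Longrightarrow> h < dd \<Longrightarrow> x (t0 - h) < x t0"
      using DERIV_pos_inc_left[OF der lpos] by blast
    define h where "h = min dd t0 / 2"
    have h: "h > 0" "h < dd" "h \<le> t0" using dd t0pos by (auto simp: h_def)
    have "x (t0 - h) < x t0" using dd(2) h by auto
    moreover have "x (t0 - h) > 0" using below[of "t0 - h"] h by auto
    ultimately show False using xt0 by simp
  qed
  obtain d where d: "d > 0" and fle: "\<forall>u v. 0 < u \<longrightarrow> u \<le> v \<longrightarrow> v < d \<longrightarrow> f u \<le> 3 * f v"
    using f_le[OF fp delta_pos phi_mono f_phi] by blast
  have Fcont: "continuous_on {0<..<1} (Fint f)"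
    by (intro continuous_at_imp_continuous_on ballI F_isCont[OF f_cont fp]) auto
  have xF: "filterlim x (at_right 0) at_top"
    by (rule tendsto_imp_filterlim_at_right[OF x_lim])
       (rule eventually_at_top_linorderI[of 0], use xpos in auto)
  have FxT: "filterlim (\<lambda>t. Fint f (x t)) at_top at_top"
    by (rule filterlim_compose[OF F_lim xF])
  have FinvD: "eventually (\<lambda>s. Finv f s < d) at_top"
  proof -
    have ev: "eventually (\<lambda>v. v < d) (at_right (0::real))"
      unfolding eventually_at_right_field using d by (intro exI[of _ d]) auto
    show ?thesis using eventually_compose_filterlim[OF ev Finv_lim[OF f_cont fp F_lim]] .
  qed
  show ?thesis
  proof (rule tendstoI)
    fix e :: real assume e: "0 < e"
    define \<epsilon> where "\<epsilon> = min (e/4) (1/2)"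
    have \<epsilon>: "0 < \<epsilon>" "\<epsilon> < 1" "\<epsilon> \<le> e/4" using e by (auto simp: \<epsilon>_def)
    obtain C where C: "C > 0" "eventually (\<lambda>t. f (Finv f (\<epsilon> * t)) \<le> C * f (Finv f t)) at_top"
    proof -
      from case_RV show ?thesis
      proof
        assume "\<beta> > 1 \<and> RV0 \<beta> f"
        thus ?thesis using key_RV0[OF f_cont fp F_lim _ _ \<epsilon>(1,2) d fle] that by blast
      next
        assume "RVinf (-1) (\<lambda>t. f (Finv f t))"
        from key_RVinf[OF this \<epsilon>(1)] show ?thesis using that by blast
      qed
    qed
    obtain N where N: "\<And>s. s \<ge> N \<Longrightarrow> Finv f s < d"
      using FinvD unfolding eventually_at_top_linorder by blast
    have E3: "eventually (\<lambda>t. Finv f (\<epsilon> * t) < d) at_top"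
    proof (rule eventually_at_top_linorderI[of "N/\<epsilon>"])
      fix t assume "N/\<epsilon> \<le> t"
      hence "N \<le> \<epsilon> * t" using \<epsilon> by (simp add: field_simps)
      thus "Finv f (\<epsilon> * t) < d" using N by blast
    qed
    have E1: "eventually (\<lambda>t. g t / f (Finv f t) > 3 * C) at_top"
      using spec[OF filterlim_at_top_dense[THEN iffD1, OF g_lim], of "3 * C"] by simp
    have E4: "eventually (\<lambda>t. x t < 1/2) at_top"
      using order_tendstoD(2)[OF x_lim, of "1/2"] by simp
    have E5: "eventually (\<lambda>t. Fint f (x t) > 0) at_top"
      using spec[OF filterlim_at_top_dense[THEN iffD1, OF FxT], of 0] by simp
    have E6: "eventually (\<lambda>t. t \<ge> (1::real)) at_top" by (rule eventually_ge_at_top)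
    have "eventually (\<lambda>t. g t / f (Finv f t) > 3 * C \<and> f (Finv f (\<epsilon> * t)) \<le> C * f (Finv f t)
        \<and> Finv f (\<epsilon> * t) < d \<and> x t < 1/2 \<and> Fint f (x t) > 0 \<and> t \<ge> 1) at_top"
      using E1 C(2) E3 E4 E5 E6 by eventually_elim blast
    then obtain T where T: "\<And>t. t \<ge> T \<Longrightarrow> g t / f (Finv f t) > 3 * C \<and> f (Finv f (\<epsilon> * t)) \<le> C * f (Finv f t)
        \<and> Finv f (\<epsilon> * t) < d \<and> x t < 1/2 \<and> Fint f (x t) > 0 \<and> t \<ge> 1"
      unfolding eventually_at_top_linorder by blast
    have Tg: "\<And>t. t \<ge> T \<Longrightarrow> g t / f (Finv f t) > 3 * C" using T by blast
    have TC: "\<And>t. t \<ge> T \<Longrightarrow> f (Finv f (\<epsilon> * t)) \<le> C * f (Finv f t)" using T by blast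
    have Td: "\<And>t. t \<ge> T \<Longrightarrow> Finv f (\<epsilon> * t) < d" using T by blast
    have Tx: "\<And>t. t \<ge> T \<Longrightarrow> x t < 1/2" using T by blast
    have TF: "\<And>t. t \<ge> T \<Longrightarrow> Fint f (x t) > 0" using T by blast
    have T1: "T \<ge> 1" using T[OF order_refl] by blast
    have key: "- f (x \<tau>) + g \<tau> > 0" if \<tau>: "\<tau> \<ge> T" "Fint f (x \<tau>) > \<epsilon> * \<tau>" for \<tau>
    proof -
      note P = Tg[OF \<tau>(1)] TC[OF \<tau>(1)] Td[OF \<tau>(1)] Tx[OF \<tau>(1)]
      have tpos: "\<tau> > 0" using \<tau>(1) T1 by simp
      have et: "\<epsilon> * \<tau> > 0" using \<epsilon> tpos by simp
      define b where "b = Finv f (\<epsilon>*\<tau>)"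
      have b: "0 < b" "Fint f b = \<epsilon>*\<tau>" "b < 1"
        using Finv_props[OF f_cont fp F_lim, of "\<epsilon>*\<tau>"] Finv_lt1[OF f_cont fp F_lim et] et
        by (auto simp: b_def)
      have xt: "x \<tau> > 0" using xpos tpos by simp
      have xb: "x \<tau> \<le> b"
      proof (rule ccontr)
        assume "\<not> x \<tau> \<le> b"
        hence "Fint f (x \<tau>) \<le> Fint f b" using F_anti[OF f_cont fp b(1), of "x \<tau>"] P(4) by auto
        thus False using \<tau>(2) b(2) by simp
      qed
      have "f (x \<tau>) \<le> 3 * f b" using fle xt xb P(3) by (auto simp: b_def)
      also have "\<dots> \<le> 3 * C * f (Finv f \<tau>)" using P(2) by (simp add: b_def)
      also have "\<dots> < g \<tau>"
      proof -
        have "f (Finv f \<tau>) > 0" using fp Finv_props(1)[OF f_cont fp F_lim, of \<tau>] tpos by auto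
        thus ?thesis using P(1) by (simp add: less_divide_eq)
      qed
      finally show ?thesis by simp
    qed
    define h where "h = (\<lambda>\<tau>. Fint f (x \<tau>) - \<epsilon> * \<tau>)"
    define m where "m = max (h T) 0"
    have hcont: "continuous_on {T..t} h" for t
    proof -
      have "continuous_on {T..t} (\<lambda>\<tau>. Fint f (x \<tau>))"
      proof (rule continuous_on_compose2[OF Fcont])
        show "continuous_on {T..t} x" by (rule continuous_on_subset[OF x_cont]) (use T1 in auto)
        show "x ` {T..t} \<subseteq> {0<..<1}"
        proof
          fix y assume "y \<in> x ` {T..t}"
          then obtain \<tau> where \<tau>: "\<tau> \<in> {T..t}" "y = x \<tau>" by blast
          have "x \<tau> < 1/2" using Tx[of \<tau>] \<tau> by auto
          moreover have "x \<tau> > 0" using xpos[of \<tau>] \<tau> T1 by auto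
          ultimately show "y \<in> {0<..<1}" using \<tau> by auto
        qed
      qed
      thus ?thesis unfolding h_def by (intro continuous_on_diff continuous_intros)
    qed
    have bound: "h t \<le> m" if t: "t \<ge> T" for t
    proof (rule ccontr)
      assume ht: "\<not> h t \<le> m"
      define S where "S = {\<tau> \<in> {T..t}. h \<tau> \<le> m}"
      have Scl: "closed S" unfolding S_def
        by (rule continuous_on_closed_Collect_le[OF hcont continuous_on_const]) auto
      have TS: "T \<in> S" using t by (auto simp: S_def m_def)
      have bdd: "bdd_above S" by (rule bdd_aboveI[of _ t]) (auto simp: S_def)
      define s where "s = Sup S"
      have sS: "s \<in> S" unfolding s_def using closed_contains_Sup[OF _ bdd Scl] TS by auto
      have s: "T \<le> s" "s \<le> t" "h s \<le> m" using sS by (auto simp: S_def)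
      have st: "s < t" using s ht by (cases "s = t") auto
      have above: "h \<tau> > m" if "s < \<tau>" "\<tau> \<le> t" for \<tau>
      proof (rule ccontr)
        assume "\<not> h \<tau> > m"
        hence "\<tau> \<in> S" using that s by (auto simp: S_def)
        hence "\<tau> \<le> s" unfolding s_def using cSup_upper[OF _ bdd] by auto
        thus False using that by simp
      qed
      have xc: "continuous_on {s..t} x" by (rule continuous_on_subset[OF x_cont]) (use s T1 in auto)
      have xd: "x differentiable (at z)" if "s < z" "z < t" for z
      proof -
        have "z > 0" using that s T1 by linarith
        thus ?thesis using x_ode unfolding real_differentiable_def by blast
      qed
      obtain l z where z: "s < z" "z < t" "DERIV x z :> l" "x t - x s = (t - s) * l"
        using MVT[OF st xc xd] by blast
      have "DERIV x z :> - f (x z) + g z" using x_ode z s T1 by auto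
      hence l: "l = - f (x z) + g z" using DERIV_unique z(3) by blast
      have "h z > m" using above z by simp
      hence "Fint f (x z) > \<epsilon> * z" using m_def h_def by simp
      hence "l > 0" using key[of z] z s l by simp
      hence "(t - s) * l > 0" using st by simp
      hence xst: "x s \<le> x t" using z(4) by linarith
      have "Fint f (x t) \<le> Fint f (x s)"
        using F_anti[OF f_cont fp _ xst] xpos[of s] Tx[OF t] s T1 by auto
      moreover have "\<epsilon> * s \<le> \<epsilon> * t" using st \<epsilon> by (simp add: mult_left_mono less_imp_le)
      ultimately have "h t \<le> h s" unfolding h_def by linarith
      thus False using s ht by simp
    qed
    show "eventually (\<lambda>t. dist (Fint f (x t) / t) 0 < e) at_top"
    proof (rule eventually_at_top_linorderI[of "max T (m/\<epsilon>)"])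
      fix t assume t: "max T (m/\<epsilon>) \<le> t"
      have tT: "t \<ge> T" using t by simp
      have tpos: "t > 0" using tT T1 by simp
      have Fp: "Fint f (x t) > 0" using TF[OF tT] .
      have "Fint f (x t) \<le> m + \<epsilon> * t" using bound[OF tT] by (simp add: h_def)
      also have "m \<le> \<epsilon> * t" using t \<epsilon> by (simp add: field_simps)
      finally have "Fint f (x t) \<le> 2 * \<epsilon> * t" by simp
      hence "Fint f (x t) / t \<le> 2 * \<epsilon>" using tpos by (simp add: divide_le_eq)
      moreover have "Fint f (x t) / t > 0" using Fp tpos by simp
      ultimately show "dist (Fint f (x t) / t) 0 < e" using \<epsilon> e by (simp add: dist_real_def)
    qed
  qed
qed

end
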